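(* Let $\mathcal T\subset\mathbb R^2$ be a nonempty closed target set, $\phi(\mathbf{x})=\min_{\mathbf{z}\in\mathcal T}\|\mathbf{x}-\mathbf{z}\|$, and fix initial positions with $\mathbf{x}_E(t_0)\ne\mathbf{x}_P(t_0)$ and $\mathbf{x}_E(t_0)\notin\mathcal T$. Assume there is $\nu<1$ with $\min_{\mathbf{x}\in\mathcal A(t_0;\nu)}\phi(\mathbf{x})=0$, and let $\nu_{\rm crit}<1$ be the smallest such $\nu$. Then, in the Generalized Target Guarding game with evader maximum speed $\nu_{\rm true}$ and pursuer maximum speed $1$, there exists a pursuer strategy that wins against every admissible evader control if and only if $\nu_{\rm true}<\nu_{\rm crit}$.
   Context: Setting: planar simple motion, $\dot{\mathbf{x}}_E=\mathbf{v}_E$ with $\|\mathbf{v}_E\|\le\nu_{\rm true}$, $\dot{\mathbf{x}}_P=\mathbf{v}_P$ with $\|\mathbf{v}_P\|\le1$; the game starts at $t_0$; capture is the first time $\mathbf{x}_P=\mathbf{x}_E$. For $\nu\in[0,1)$, $\mathcal A(t_0;\nu)$ is the closed disc with center $\frac{1}{1-\nu^2}\mathbf{x}_E(t_0)-\frac{\nu^2}{1-\nu^2}\mathbf{x}_P(t_0)$ and radius $\frac{\nu}{1-\nu^2}\|\mathbf{x}_E(t_0)-\mathbf{x}_P(t_0)\|$. Generalized Target Guarding: the evader wins if it reaches a point of $\mathcal T$ at a time no later than capture (ties go to the evader); the pursuer wins if capture occurs strictly before the evader reaches $\mathcal T$. The target set is not an obstacle. *)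

theory Defs
  imports "HOL-Analysis.Analysis"
begin

type_synonym pt = "real^2"

definition apollonius :: "pt \<Rightarrow> pt \<Rightarrow> real \<Rightarrow> pt set" where
  "apollonius xE xP \<nu> =
     cball ((1 / (1 - \<nu>\<^sup>2)) *\<^sub>R xE - (\<nu>\<^sup>2 / (1 - \<nu>\<^sup>2)) *\<^sub>R xP)
           (\<nu> / (1 - \<nu>\<^sup>2) * dist xE xP)"

text \<open>phi(x) = distance from x to the target set T (a minimum for closed nonempty T).\<close>
definition phi :: "pt set \<Rightarrow> pt \<Rightarrow> real" where
  "phi T x = infdist x T"

definition crit_set :: "pt set \<Rightarrow> pt \<Rightarrow> pt \<Rightarrow> real set" where
  "crit_set T xE xP = {\<nu>. 0 \<le> \<nu> \<and> \<nu> < 1 \<and> (INF x\<in>apollonius xE xP \<nu>. phi T x) = 0}"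

text \<open>Trajectories generated by admissible controls from time t0 on: absolutely continuous
  paths with speed bounded by c, i.e. c-Lipschitz paths on [t0,\<infinity>), starting at x0.\<close>
definition admissible :: "real \<Rightarrow> real \<Rightarrow> pt \<Rightarrow> (real \<Rightarrow> pt) \<Rightarrow> bool" where
  "admissible c t0 x0 x \<longleftrightarrow> x t0 = x0 \<and> c-lipschitz_on {t0..} x"

text \<open>Pursuer wins the play: capture happens at some time tc strictly before the evader
  reaches T (the evader has not been in T at any time in [t0,tc]; ties go to the evader).\<close>
definition pursuer_wins_play :: "pt set \<Rightarrow> real \<Rightarrow> (real \<Rightarrow> pt) \<Rightarrow> (real \<Rightarrow> pt) \<Rightarrow> bool" where
  "pursuer_wins_play T t0 xE xP \<longleftrightarrow>
     (\<exists>tc\<ge>t0. xP tc = xE tc \<and> (\<forall>s\<in>{t0..tc}. xE s \<notin> T))"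

definition pursuer_strategy ::
  "real \<Rightarrow> real \<Rightarrow> pt \<Rightarrow> pt \<Rightarrow> ((real \<Rightarrow> pt) \<Rightarrow> (real \<Rightarrow> pt)) \<Rightarrow> bool" where
  "pursuer_strategy \<nu> t0 xE0 xP0 \<beta> \<longleftrightarrow>
     (\<forall>e. admissible \<nu> t0 xE0 e \<longrightarrow> admissible 1 t0 xP0 (\<beta> e)) \<and>
     (\<forall>e1 e2 t. admissible \<nu> t0 xE0 e1 \<longrightarrow> admissible \<nu> t0 xE0 e2 \<longrightarrow> t0 \<le> t \<longrightarrow>
        (\<forall>s\<in>{t0..t}. e1 s = e2 s) \<longrightarrow> (\<forall>s\<in>{t0..t}. \<beta> e1 s = \<beta> e2 s))"

end

theory Submission
  imports Defs
begin

definition Nf :: "real \<Rightarrow> pt \<Rightarrow> pt \<Rightarrow> real" where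
  "Nf a v z = sqrt (a\<^sup>2 * (z \<bullet> v)\<^sup>2 + a * (v \<bullet> v) * (z \<bullet> z))"

definition psi :: "real \<Rightarrow> pt \<Rightarrow> pt \<Rightarrow> real" where
  "psi a v z = 1 - (Nf a v z + a * (z \<bullet> v)) / (a * (v \<bullet> v))"

definition mm :: "real \<Rightarrow> pt \<Rightarrow> pt \<Rightarrow> real" where
  "mm a v z = max 0 (psi a v z)"

lemma Nf_pair: assumes "a > 0" shows "Nf a v z = norm (a * (z \<bullet> v), sqrt (a * (v \<bullet> v)) *\<^sub>R z)"
proof -
  have "(norm (sqrt (a * (v \<bullet> v)) *\<^sub>R z))\<^sup>2 = a * (v \<bullet> v) * (z \<bullet> z)"
    using assms by (simp add: power2_norm_eq_inner power_mult_distrib inner_ge_zero)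
  then show ?thesis by (simp add: Nf_def norm_Pair power_mult_distrib)
qed

lemma Nf_sq: assumes "a > 0" shows "(Nf a v z)\<^sup>2 = a\<^sup>2 * (z \<bullet> v)\<^sup>2 + a * (v \<bullet> v) * (z \<bullet> z)"
proof -
  have "0 \<le> a * (v \<bullet> v) * (z \<bullet> z)" using assms by (simp add: inner_ge_zero)
  then show ?thesis unfolding Nf_def by (intro real_sqrt_pow2 add_nonneg_nonneg) simp_all
qed

lemma Nf_ge: assumes "a > 0" shows "a * \<bar>z \<bullet> v\<bar> \<le> Nf a v z"
  unfolding Nf_def
  by (rule real_le_rsqrt) (use assms in \<open>simp add: power_mult_distrib inner_ge_zero\<close>)

lemma Nf_nonneg: assumes "a > 0" shows "Nf a v z \<ge> 0"
  using Nf_ge[OF assms, of z v] assms by (smt (verit) mult_nonneg_nonneg abs_ge_zero)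

lemma Nf_diff: assumes "a > 0" shows "\<bar>Nf a v x - Nf a v y\<bar> \<le> Nf a v (x - y)"
proof -
  have "(a * ((x - y) \<bullet> v), sqrt (a * (v \<bullet> v)) *\<^sub>R (x - y)) =
        (a * (x \<bullet> v), sqrt (a * (v \<bullet> v)) *\<^sub>R x) - (a * (y \<bullet> v), sqrt (a * (v \<bullet> v)) *\<^sub>R y)"
    by (simp add: inner_diff_left algebra_simps)
  then show ?thesis using assms norm_triangle_ineq3 by (metis Nf_pair)
qed

lemma G_lip:
  assumes mu: "0 < \<mu>" "\<mu> < 1" and v: "v \<noteq> 0" and a: "a = \<mu>\<^sup>2 / (1 - \<mu>\<^sup>2)"
    and l: "0 \<le> l" "l \<le> 1"
  shows "norm ((x + (l * mm a v x) *\<^sub>R v) - (y + (l * mm a v y) *\<^sub>R v)) \<le> norm (x - y) / \<mu>"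
proof -
  have mu2: "\<mu>\<^sup>2 < 1" using mu by (simp add: power_less_one_iff)
  have a0: "a > 0" using a mu mu2 by simp
  define r2 where "r2 = v \<bullet> v"
  have r2: "r2 > 0" using v by (simp add: r2_def)
  define d where "d = (x - y) \<bullet> v"
  define D2 where "D2 = (x - y) \<bullet> (x - y)"
  define n where "n = Nf a v (x - y)"
  have n2: "n\<^sup>2 = a\<^sup>2 * d\<^sup>2 + a * r2 * D2" using Nf_sq[OF a0] by (simp add: n_def d_def r2_def D2_def)
  have nge: "a * \<bar>d\<bar> \<le> n" using Nf_ge[OF a0] by (simp add: n_def d_def)
  define p where "p = psi a v x"
  define q where "q = psi a v y"
  define tm where "tm = (- a * d - n) / (a * r2)"
  define tp where "tp = (- a * d + n) / (a * r2)"
  have ar: "a * r2 > 0" using a0 r2 by simp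
  have pq: "p - q = - ((Nf a v x - Nf a v y) + a * d) / (a * r2)"
  proof -
    have "p - q = ((Nf a v y + a * (y \<bullet> v)) - (Nf a v x + a * (x \<bullet> v))) / (a * r2)"
      unfolding p_def q_def psi_def r2_def by (simp add: diff_divide_distrib)
    also have "(Nf a v y + a * (y \<bullet> v)) - (Nf a v x + a * (x \<bullet> v)) = - ((Nf a v x - Nf a v y) + a * d)"
      unfolding d_def by (simp add: inner_diff_left right_diff_distrib)
    finally show ?thesis .
  qed
  have nd: "\<bar>Nf a v x - Nf a v y\<bar> \<le> n" using Nf_diff[OF a0] by (simp add: n_def)
  have pq1: "tm \<le> p - q" unfolding pq tm_def using ar nd
    by (intro divide_right_mono) auto
  have pq2: "p - q \<le> tp" unfolding pq tp_def using ar nd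
    by (intro divide_right_mono) auto
  have h1: "a * (- d) \<le> a * \<bar>d\<bar>" using a0 by (intro mult_left_mono) auto
  have h2: "a * d \<le> a * \<bar>d\<bar>" using a0 by (intro mult_left_mono) auto
  have tm0: "tm \<le> 0" unfolding tm_def using ar nge h1
    by (intro divide_nonpos_pos) auto
  have tp0: "0 \<le> tp" unfolding tp_def using ar nge h2
    by (intro divide_nonneg_pos) auto
  define \<tau> where "\<tau> = l * (max 0 p - max 0 q)"
  have t1: "tm \<le> \<tau>" and t2: "\<tau> \<le> tp"
  proof -
    define w where "w = max 0 p - max 0 q"
    have w: "min 0 (p - q) \<le> w \<and> w \<le> max 0 (p - q)" unfolding w_def by auto
    have "min 0 (p - q) \<le> \<tau> \<and> \<tau> \<le> max 0 (p - q)"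
    proof (cases "w \<ge> 0")
      case True
      have "l * w \<le> w" using True l by (intro mult_left_le_one_le) auto
      moreover have "0 \<le> l * w" using True l by simp
      ultimately show ?thesis using w unfolding \<tau>_def w_def[symmetric] by linarith
    next
      case False
      have "l * (- w) \<le> - w" using False l by (intro mult_left_le_one_le) auto
      moreover have "0 \<le> l * (- w)" using False l by (intro mult_nonneg_nonneg) auto
      ultimately show ?thesis using w unfolding \<tau>_def w_def[symmetric] by linarith
    qed
    then show "tm \<le> \<tau>" "\<tau> \<le> tp" using pq1 pq2 tm0 tp0 by linarith+
  qed
  have vec: "(x + (l * mm a v x) *\<^sub>R v) - (y + (l * mm a v y) *\<^sub>R v) = (x - y) + \<tau> *\<^sub>R v"
  proof -
    have "(x + (l * mm a v x) *\<^sub>R v) - (y + (l * mm a v y) *\<^sub>R v) = (x - y) + (l * mm a v x - l * mm a v y) *\<^sub>R v"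
      by (simp add: scaleR_diff_left)
    moreover have "l * mm a v x - l * mm a v y = \<tau>" unfolding \<tau>_def mm_def p_def q_def by (simp add: right_diff_distrib)
    ultimately show ?thesis by simp
  qed
  have nsq: "(norm ((x - y) + \<tau> *\<^sub>R v))\<^sup>2 = D2 + 2 * \<tau> * d + \<tau>\<^sup>2 * r2"
  proof -
    have "(norm ((x - y) + \<tau> *\<^sub>R v))\<^sup>2 = ((x - y) + \<tau> *\<^sub>R v) \<bullet> ((x - y) + \<tau> *\<^sub>R v)"
      by (rule power2_norm_eq_inner)
    also have "\<dots> = (x - y) \<bullet> (x - y) + \<tau> * ((x - y) \<bullet> v) + \<tau> * (v \<bullet> (x - y)) + \<tau> * (\<tau> * (v \<bullet> v))"
      by (simp add: inner_add_left inner_add_right distrib_left)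
    also have "v \<bullet> (x - y) = (x - y) \<bullet> v" by (rule inner_commute)
    finally show ?thesis unfolding D2_def d_def r2_def by (simp add: power2_eq_square)
  qed
  have sumt: "tm + tp = - 2 * d / r2"
  proof -
    have "tm + tp = ((- a * d - n) + (- a * d + n)) / (a * r2)" unfolding tm_def tp_def
      by (rule add_divide_distrib[symmetric])
    also have "(- a * d - n) + (- a * d + n) = a * (- 2 * d)" by simp
    also have "a * (- 2 * d) / (a * r2) = - 2 * d / r2" using a0 by simp
    finally show ?thesis .
  qed
  have prodt: "tm * tp = - D2 / (a * r2)"
  proof -
    have "tm * tp = ((- a * d - n) * (- a * d + n)) / ((a * r2) * (a * r2))" unfolding tm_def tp_def
      by simp
    also have "(- a * d - n) * (- a * d + n) = a\<^sup>2 * d\<^sup>2 - n\<^sup>2" by (simp add: algebra_simps power2_eq_square)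
    also have "a\<^sup>2 * d\<^sup>2 - n\<^sup>2 = (a * r2) * (- D2)" unfolding n2 by (simp add: algebra_simps)
    also have "(a * r2) * (- D2) / ((a * r2) * (a * r2)) = - D2 / (a * r2)" using ar by simp
    finally show ?thesis .
  qed
  have ident: "D2 + 2 * \<tau> * d + \<tau>\<^sup>2 * r2 = r2 * (\<tau> - tm) * (\<tau> - tp) + D2 * (1 + 1 / a)"
  proof -
    have e1: "r2 * (\<tau> - tm) * (\<tau> - tp) = r2 * \<tau>\<^sup>2 - \<tau> * (r2 * (tm + tp)) + r2 * (tm * tp)"
      by (simp add: algebra_simps power2_eq_square)
    have e2: "r2 * (tm + tp) = - 2 * d" unfolding sumt using r2 by simp
    have e3: "r2 * (tm * tp) = - D2 / a" unfolding prodt using r2 by simp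
    show ?thesis unfolding e1 e2 e3 by (simp add: algebra_simps)
  qed
  have neg: "r2 * (\<tau> - tm) * (\<tau> - tp) \<le> 0" using r2 t1 t2
    by (simp add: mult_nonneg_nonpos)
  have ainv: "1 + 1 / a = 1 / \<mu>\<^sup>2"
  proof -
    have m0: "\<mu>\<^sup>2 \<noteq> 0" using mu by simp
    have m1: "1 - \<mu>\<^sup>2 \<noteq> 0" using mu2 by simp
    have "1 / a = (1 - \<mu>\<^sup>2) / \<mu>\<^sup>2" unfolding a by simp
    also have "1 + (1 - \<mu>\<^sup>2) / \<mu>\<^sup>2 = 1 / \<mu>\<^sup>2" using m0 by (simp add: field_simps)
    finally show ?thesis by simp
  qed
  have D2n: "D2 = (norm (x - y))\<^sup>2" unfolding D2_def by (rule power2_norm_eq_inner[symmetric])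
  have "(norm ((x - y) + \<tau> *\<^sub>R v))\<^sup>2 = r2 * (\<tau> - tm) * (\<tau> - tp) + D2 * (1 + 1 / a)"
    using nsq ident by linarith
  also have "\<dots> \<le> D2 * (1 + 1 / a)" using neg by linarith
  also have "D2 * (1 + 1 / a) = (norm (x - y) / \<mu>)\<^sup>2" unfolding ainv D2n power_divide by simp
  finally have "(norm ((x - y) + \<tau> *\<^sub>R v))\<^sup>2 \<le> (norm (x - y) / \<mu>)\<^sup>2" .
  then have "norm ((x - y) + \<tau> *\<^sub>R v) \<le> norm (x - y) / \<mu>"
    by (rule power2_le_imp_le) (use mu in \<open>simp add: divide_nonneg_pos\<close>)
  then show ?thesis unfolding vec .
qed

lemma psi_zero: assumes "a > 0" "v \<noteq> 0" shows "psi a v 0 = 1"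
  using assms by (simp add: psi_def Nf_def)

lemma psi_le1: assumes "a > 0" "v \<noteq> 0" shows "psi a v z \<le> 1"
proof -
  have "a * (- (z \<bullet> v)) \<le> a * \<bar>z \<bullet> v\<bar>" using assms by (intro mult_left_mono) auto
  then have "0 \<le> Nf a v z + a * (z \<bullet> v)" using Nf_ge[OF assms(1), of z v] by simp
  moreover have "0 < a * (v \<bullet> v)" using assms by simp
  ultimately have "0 \<le> (Nf a v z + a * (z \<bullet> v)) / (a * (v \<bullet> v))" by simp
  then show ?thesis unfolding psi_def by simp
qed

lemma mm_bounds: assumes "a > 0" "v \<noteq> 0" shows "0 \<le> mm a v z" "mm a v z \<le> 1"
  using psi_le1[OF assms, of z] by (auto simp: mm_def)

lemma psi_cont: assumes "a > 0" "v \<noteq> 0" shows "continuous_on UNIV (psi a v)"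
  unfolding psi_def Nf_def using assms by (intro continuous_intros) auto

lemma psi_apol:
  assumes mu: "0 < \<mu>" "\<mu> < 1" and v: "v \<noteq> 0" and a: "a = \<mu>\<^sup>2 / (1 - \<mu>\<^sup>2)"
    and p: "0 \<le> psi a v z"
  shows "norm z \<le> \<mu> * norm (z - v)"
proof -
  have mu2: "\<mu>\<^sup>2 < 1" using mu by (simp add: power_less_one_iff)
  have a0: "a > 0" using a mu mu2 by simp
  define r2 where "r2 = v \<bullet> v"
  have r2: "r2 > 0" using v by (simp add: r2_def)
  define d where "d = z \<bullet> v"
  define zz where "zz = z \<bullet> z"
  have ar: "a * r2 > 0" using a0 r2 by simp
  have "(Nf a v z + a * d) / (a * r2) \<le> 1" using p unfolding psi_def d_def r2_def by simp
  then have le: "Nf a v z \<le> a * r2 - a * d" using ar by (simp add: divide_le_eq)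
  have "(Nf a v z)\<^sup>2 \<le> (a * r2 - a * d)\<^sup>2"
    using le Nf_nonneg[OF a0] by (intro power_mono) auto
  then have "a\<^sup>2 * d\<^sup>2 + a * r2 * zz \<le> (a * r2 - a * d)\<^sup>2"
    using Nf_sq[OF a0, of v z] by (simp add: d_def r2_def zz_def)
  then have "(a * r2) * zz \<le> (a * r2) * (a * r2 - 2 * a * d)"
    by (simp add: power2_eq_square algebra_simps)
  then have zle: "zz \<le> a * r2 - 2 * a * d" using ar by (metis mult_le_cancel_left_pos)
  have am: "a * (1 - \<mu>\<^sup>2) = \<mu>\<^sup>2" unfolding a using mu2 by simp
  have "(1 - \<mu>\<^sup>2) * zz \<le> (1 - \<mu>\<^sup>2) * (a * r2 - 2 * a * d)"
    using zle mu2 by (intro mult_left_mono) auto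
  also have "(1 - \<mu>\<^sup>2) * (a * r2 - 2 * a * d) = (a * (1 - \<mu>\<^sup>2)) * (r2 - 2 * d)"
    by (simp add: algebra_simps)
  finally have "(1 - \<mu>\<^sup>2) * zz \<le> \<mu>\<^sup>2 * (r2 - 2 * d)" unfolding am .
  then have "zz \<le> \<mu>\<^sup>2 * (zz - 2 * d + r2)" by (simp add: algebra_simps)
  moreover have "(norm (z - v))\<^sup>2 = zz - 2 * d + r2"
    unfolding power2_norm_eq_inner zz_def d_def r2_def
    by (simp add: inner_diff_left inner_diff_right inner_commute)
  moreover have "(norm z)\<^sup>2 = zz" unfolding zz_def by (rule power2_norm_eq_inner)
  ultimately have "(norm z)\<^sup>2 \<le> (\<mu> * norm (z - v))\<^sup>2" by (simp add: power_mult_distrib)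
  then show ?thesis by (rule power2_le_imp_le) (use mu in simp)
qed

lemma apol_iff:
  assumes "0 \<le> \<mu>" "\<mu> < 1"
  shows "x \<in> apollonius xE xP \<mu> \<longleftrightarrow> norm (x - xE) \<le> \<mu> * norm (x - xP)"
proof -
  have mu2: "\<mu>\<^sup>2 < 1" using assms by (simp add: power_less_one_iff)
  define b where "b = 1 - \<mu>\<^sup>2"
  have b: "b > 0" using mu2 by (simp add: b_def)
  define A where "A = x - xE"
  define B where "B = x - xP"
  define C where "C = (1 / (1 - \<mu>\<^sup>2)) *\<^sub>R xE - (\<mu>\<^sup>2 / (1 - \<mu>\<^sup>2)) *\<^sub>R xP"
  have xC: "x - C = (1 / b) *\<^sub>R (A - \<mu>\<^sup>2 *\<^sub>R B)"
  proof -
    have e1: "A - \<mu>\<^sup>2 *\<^sub>R B = b *\<^sub>R x - xE + \<mu>\<^sup>2 *\<^sub>R xP"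
      by (simp add: A_def B_def b_def algebra_simps)
    have e2: "(1 / b) *\<^sub>R (b *\<^sub>R x - xE + \<mu>\<^sup>2 *\<^sub>R xP) = x - (1 / b) *\<^sub>R xE + (\<mu>\<^sup>2 / b) *\<^sub>R xP"
      using b by (simp add: scaleR_add_right scaleR_diff_right)
    have e3: "C = (1 / b) *\<^sub>R xE - (\<mu>\<^sup>2 / b) *\<^sub>R xP" unfolding C_def b_def ..
    show ?thesis unfolding e1 e2 e3 by (simp add: algebra_simps)
  qed
  have dEP: "dist xE xP = norm (B - A)" unfolding A_def B_def dist_norm by (simp add: norm_minus_commute)
  have "x \<in> apollonius xE xP \<mu> \<longleftrightarrow> norm (x - C) \<le> \<mu> / b * norm (B - A)"
  proof -
    have "x \<in> apollonius xE xP \<mu> \<longleftrightarrow> dist C x \<le> \<mu> / (1 - \<mu>\<^sup>2) * dist xE xP"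
      unfolding apollonius_def mem_cball C_def ..
    then show ?thesis unfolding dEP b_def[symmetric] by (simp add: dist_norm norm_minus_commute)
  qed
  also have "\<dots> \<longleftrightarrow> norm (A - \<mu>\<^sup>2 *\<^sub>R B) \<le> \<mu> * norm (B - A)"
  proof -
    have h: "\<And>X Y. (\<bar>1 / b\<bar> * X \<le> \<mu> / b * Y) = (X \<le> \<mu> * Y)" using b by (simp add: field_simps)
    show ?thesis unfolding xC norm_scaleR h ..
  qed
  also have "\<dots> \<longleftrightarrow> (norm (A - \<mu>\<^sup>2 *\<^sub>R B))\<^sup>2 \<le> (\<mu> * norm (B - A))\<^sup>2"
    using assms by (simp add: abs_le_square_iff[symmetric])
  also have "\<dots> \<longleftrightarrow> b * ((norm A)\<^sup>2 - \<mu>\<^sup>2 * (norm B)\<^sup>2) \<le> 0"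
  proof -
    have "(norm (A - \<mu>\<^sup>2 *\<^sub>R B))\<^sup>2 - (\<mu> * norm (B - A))\<^sup>2 = b * ((norm A)\<^sup>2 - \<mu>\<^sup>2 * (norm B)\<^sup>2)"
      unfolding power2_norm_eq_inner power_mult_distrib b_def
      by (simp add: inner_diff_left inner_diff_right inner_commute power2_eq_square algebra_simps)
    then show ?thesis by linarith
  qed
  also have "\<dots> \<longleftrightarrow> (norm A)\<^sup>2 \<le> (\<mu> * norm B)\<^sup>2"
    using b by (simp add: mult_le_0_iff power_mult_distrib)
  also have "\<dots> \<longleftrightarrow> norm A \<le> \<mu> * norm B"
    using assms by (simp add: abs_le_square_iff[symmetric])
  finally show ?thesis unfolding A_def B_def .
qed

lemma max0_lip: "\<bar>max 0 p - max 0 q\<bar> \<le> \<bar>p - (q::real)\<bar>" by auto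

lemma partB:
  fixes T :: "pt set" and xE0 xP0 :: pt and t0 \<nu> \<mu> :: real
  assumes ne: "xE0 \<noteq> xP0" and nu: "0 \<le> \<nu>" "\<nu> < \<mu>" and mu: "0 < \<mu>" "\<mu> < 1"
    and disj: "\<And>x. norm (x - xE0) \<le> \<mu> * norm (x - xP0) \<Longrightarrow> x \<notin> T"
  shows "\<exists>\<beta>. pursuer_strategy \<nu> t0 xE0 xP0 \<beta> \<and>
            (\<forall>e. admissible \<nu> t0 xE0 e \<longrightarrow> pursuer_wins_play T t0 e (\<beta> e))"
proof -
  define v where "v = xP0 - xE0"
  have v0: "v \<noteq> 0" using ne by (simp add: v_def)
  define r0 where "r0 = norm v"
  have r0: "r0 > 0" using v0 by (simp add: r0_def)
  define a where "a = \<mu>\<^sup>2 / (1 - \<mu>\<^sup>2)"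
  have mu2: "\<mu>\<^sup>2 < 1" using mu by (simp add: power_less_one_iff)
  have a0: "a > 0" unfolding a_def using mu mu2 by simp
  define c where "c = (1 - \<nu> / \<mu>) / r0"
  have nm: "\<nu> / \<mu> < 1" using nu mu by simp
  have c0: "c > 0" unfolding c_def using nm r0 by simp
  have cr: "c * r0 = 1 - \<nu> / \<mu>" unfolding c_def using r0 by simp
  define lam where "lam t = max 0 (1 - c * (t - t0))" for t
  define \<beta> where "\<beta> e t = e t + (lam t * mm a v (e t - xE0)) *\<^sub>R v" for e :: "real \<Rightarrow> pt" and t
  have lam01: "0 \<le> lam t" "lam t \<le> 1" if "t0 \<le> t" for t
    using that c0 by (auto simp: lam_def)
  have lamlip: "\<bar>lam t - lam s\<bar> \<le> c * \<bar>t - s\<bar>" for t s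
  proof -
    have "\<bar>lam t - lam s\<bar> \<le> \<bar>(1 - c * (t - t0)) - (1 - c * (s - t0))\<bar>"
      unfolding lam_def by (rule max0_lip)
    also have "(1 - c * (t - t0)) - (1 - c * (s - t0)) = c * (s - t)" by (simp add: algebra_simps)
    also have "\<bar>c * (s - t)\<bar> = c * \<bar>t - s\<bar>" using c0 by (simp add: abs_mult abs_minus_commute)
    finally show ?thesis .
  qed
  have mm1: "mm a v 0 = 1" using psi_zero[OF a0 v0] by (simp add: mm_def)
  have adm: "admissible 1 t0 xP0 (\<beta> e)" if e: "admissible \<nu> t0 xE0 e" for e
  proof -
    have e0: "e t0 = xE0" and el: "\<nu>-lipschitz_on {t0..} e" using e by (auto simp: admissible_def)
    have "\<beta> e t0 = xP0" unfolding \<beta>_def e0 lam_def using mm1 by (simp add: v_def)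
    moreover have "1-lipschitz_on {t0..} (\<beta> e)"
    proof (rule lipschitz_onI)
      fix t s assume t: "t \<in> {t0..}" and s: "s \<in> {t0..}"
      define zt where "zt = e t - xE0"
      define zs where "zs = e s - xE0"
      have split: "\<beta> e t - \<beta> e s = ((zt + (lam t * mm a v zt) *\<^sub>R v) - (zs + (lam t * mm a v zs) *\<^sub>R v))
                    + ((lam t - lam s) * mm a v zs) *\<^sub>R v"
        unfolding \<beta>_def zt_def zs_def by (simp add: algebra_simps)
      have n1: "norm ((zt + (lam t * mm a v zt) *\<^sub>R v) - (zs + (lam t * mm a v zs) *\<^sub>R v)) \<le> norm (zt - zs) / \<mu>"
        using G_lip[OF mu v0 a_def lam01[of t]] t by simp
      have "norm (zt - zs) = dist (e t) (e s)" unfolding zt_def zs_def dist_norm by simp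
      also have "\<dots> \<le> \<nu> * dist t s" using lipschitz_onD[OF el t s] .
      finally have n1': "norm (zt - zs) / \<mu> \<le> \<nu> / \<mu> * dist t s" using mu by (simp add: divide_right_mono)
      have "norm (((lam t - lam s) * mm a v zs) *\<^sub>R v) = \<bar>lam t - lam s\<bar> * mm a v zs * r0"
        using mm_bounds[OF a0 v0, of zs] by (simp add: r0_def abs_mult)
      also have "\<dots> \<le> (c * \<bar>t - s\<bar>) * 1 * r0"
        using lamlip[of t s] mm_bounds[OF a0 v0, of zs] r0
        by (intro mult_right_mono mult_mono) auto
      also have "\<dots> = (c * r0) * dist t s" by (simp add: dist_real_def)
      also have "\<dots> = (1 - \<nu> / \<mu>) * dist t s" unfolding cr ..
      finally have n2: "norm (((lam t - lam s) * mm a v zs) *\<^sub>R v) \<le> (1 - \<nu> / \<mu>) * dist t s" .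
      have "dist (\<beta> e t) (\<beta> e s) = norm (\<beta> e t - \<beta> e s)" by (simp add: dist_norm)
      also have "\<dots> \<le> norm ((zt + (lam t * mm a v zt) *\<^sub>R v) - (zs + (lam t * mm a v zs) *\<^sub>R v))
                    + norm (((lam t - lam s) * mm a v zs) *\<^sub>R v)" unfolding split by (rule norm_triangle_ineq)
      also have "\<dots> \<le> \<nu> / \<mu> * dist t s + (1 - \<nu> / \<mu>) * dist t s" using n1 n1' n2 by linarith
      finally show "dist (\<beta> e t) (\<beta> e s) \<le> 1 * dist t s" by (simp add: algebra_simps)
    qed simp
    ultimately show ?thesis by (simp add: admissible_def)
  qed
  have strat: "pursuer_strategy \<nu> t0 xE0 xP0 \<beta>"
    unfolding pursuer_strategy_def using adm by (auto simp: \<beta>_def)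
  have win: "pursuer_wins_play T t0 e (\<beta> e)" if e: "admissible \<nu> t0 xE0 e" for e
  proof -
    have e0: "e t0 = xE0" and el: "\<nu>-lipschitz_on {t0..} e" using e by (auto simp: admissible_def)
    define t1 where "t1 = t0 + 1 / c"
    have t01: "t0 < t1" using c0 by (simp add: t1_def)
    define g where "g t = psi a v (e t - xE0)" for t
    have econt: "continuous_on {t0..t1} e"
      using lipschitz_on_continuous_on[OF el] by (rule continuous_on_subset) auto
    have gcont: "continuous_on {t0..t1} g"
    proof -
      have "continuous_on {t0..t1} (\<lambda>t. e t - xE0)" using econt by (intro continuous_intros)
      then show ?thesis unfolding g_def
        using continuous_on_compose2[OF psi_cont[OF a0 v0]] by blast
    qed
    define K where "K = ({t0..t1} \<inter> g -` {..0}) \<union> {t1}"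
    have Kc: "compact K"
    proof -
      have "closed ({t0..t1} \<inter> g -` {..0})" using continuous_closed_preimage[OF gcont] by auto
      then have "closed K" unfolding K_def by auto
      moreover have "bounded K" unfolding K_def using t01
        by (intro bounded_subset[OF bounded_closed_interval[of t0 t1]]) auto
      ultimately show ?thesis by (simp add: compact_eq_bounded_closed)
    qed
    have Kne: "K \<noteq> {}" unfolding K_def by auto
    obtain tc where tcK: "tc \<in> K" and tcmin: "\<forall>t\<in>K. tc \<le> t" using compact_attains_inf[OF Kc Kne] by blast
    have tc: "t0 \<le> tc" "tc \<le> t1" using tcK t01 unfolding K_def by auto
    have capture: "\<beta> e tc = e tc"
    proof (cases "tc = t1")
      case True
      then have "lam tc = 0" unfolding lam_def t1_def using c0 by simp
      then show ?thesis unfolding \<beta>_def by simp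
    next
      case False
      then have "g tc \<le> 0" using tcK unfolding K_def by auto
      then have "mm a v (e tc - xE0) = 0" unfolding mm_def g_def by simp
      then show ?thesis unfolding \<beta>_def by simp
    qed
    have gpos: "0 \<le> g s" if s: "s \<in> {t0..tc}" for s
    proof -
      define F where "F = {t0..t1} \<inter> g -` {0..}"
      have Fc: "closed F" unfolding F_def using continuous_closed_preimage[OF gcont] by auto
      have sub: "{t0..<tc} \<subseteq> F"
      proof
        fix r assume r: "r \<in> {t0..<tc}"
        then have "r \<notin> K" using tcmin by force
        moreover have "r \<in> {t0..t1}" "r \<noteq> t1" using r tc by auto
        ultimately have "0 < g r" unfolding K_def by auto
        then show "r \<in> F" unfolding F_def using \<open>r \<in> {t0..t1}\<close> by auto
      qed
      show ?thesis
      proof (cases "t0 < tc")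
        case True
        then have "closure {t0..<tc} \<subseteq> F" using closure_minimal[OF sub Fc] by simp
        then have "{t0..tc} \<subseteq> F" using True by simp
        then show ?thesis using s unfolding F_def by auto
      next
        case False
        then have "s = t0" using s tc by auto
        then show ?thesis unfolding g_def using e0 psi_zero[OF a0 v0] by simp
      qed
    qed
    have notT: "\<forall>s\<in>{t0..tc}. e s \<notin> T"
    proof
      fix s assume s: "s \<in> {t0..tc}"
      have "norm (e s - xE0) \<le> \<mu> * norm ((e s - xE0) - v)"
        using psi_apol[OF mu v0 a_def] gpos[OF s] unfolding g_def by blast
      also have "(e s - xE0) - v = e s - xP0" unfolding v_def by simp
      finally show "e s \<notin> T" using disj by blast
    qed
    show ?thesis unfolding pursuer_wins_play_def using tc capture notT by blast
  qed
  show ?thesis using strat win by blast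
qed

lemma min_lip: "\<bar>min p l - min q l\<bar> \<le> \<bar>p - (q::real)\<bar>" by (auto simp: min_def)

lemma partA:
  fixes T :: "pt set" and xE0 xP0 w :: pt and t0 \<nu> \<kappa> :: real
  assumes xT: "xE0 \<notin> T" and k: "0 < \<kappa>" "\<kappa> < 1" "\<kappa> \<le> \<nu>"
    and w: "w \<in> T" "norm (w - xE0) \<le> \<kappa> * norm (w - xP0)"
  shows "\<not> (\<exists>\<beta>. pursuer_strategy \<nu> t0 xE0 xP0 \<beta> \<and>
            (\<forall>e. admissible \<nu> t0 xE0 e \<longrightarrow> pursuer_wins_play T t0 e (\<beta> e)))"
proof
  assume "\<exists>\<beta>. pursuer_strategy \<nu> t0 xE0 xP0 \<beta> \<and>
            (\<forall>e. admissible \<nu> t0 xE0 e \<longrightarrow> pursuer_wins_play T t0 e (\<beta> e))"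
  then obtain \<beta> where st: "pursuer_strategy \<nu> t0 xE0 xP0 \<beta>"
    and wins: "\<forall>e. admissible \<nu> t0 xE0 e \<longrightarrow> pursuer_wins_play T t0 e (\<beta> e)" by blast
  define l where "l = norm (w - xE0)"
  have wE: "w \<noteq> xE0" using w xT by auto
  have l0: "l > 0" using wE by (simp add: l_def)
  have nu0: "\<nu> > 0" using k by simp
  define \<sigma> where "\<sigma> t = min (\<nu> * (t - t0)) l" for t
  define e where "e t = xE0 + (\<sigma> t / l) *\<^sub>R (w - xE0)" for t
  have ediff: "dist (e t) (e s) = \<bar>\<sigma> t - \<sigma> s\<bar>" for t s
  proof -
    have "e t - e s = ((\<sigma> t - \<sigma> s) / l) *\<^sub>R (w - xE0)" unfolding e_def
      by (simp add: scaleR_diff_left diff_divide_distrib)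
    then have "dist (e t) (e s) = \<bar>\<sigma> t - \<sigma> s\<bar> / l * l" by (simp add: dist_norm l_def)
    then show ?thesis using l0 by simp
  qed
  have adm: "admissible \<nu> t0 xE0 e"
  proof -
    have "e t0 = xE0" unfolding e_def \<sigma>_def using l0 by simp
    moreover have "\<nu>-lipschitz_on {t0..} e"
    proof (rule lipschitz_onI)
      fix t s :: real
      have "dist (e t) (e s) \<le> \<bar>\<nu> * (t - t0) - \<nu> * (s - t0)\<bar>" unfolding ediff \<sigma>_def by (rule min_lip)
      also have "\<nu> * (t - t0) - \<nu> * (s - t0) = \<nu> * (t - s)" by (simp add: algebra_simps)
      also have "\<bar>\<nu> * (t - s)\<bar> = \<nu> * dist t s" using nu0 by (simp add: abs_mult dist_real_def)
      finally show "dist (e t) (e s) \<le> \<nu> * dist t s" .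
    qed (use nu0 in simp)
    ultimately show ?thesis by (simp add: admissible_def)
  qed
  have admb: "admissible 1 t0 xP0 (\<beta> e)" using st adm unfolding pursuer_strategy_def by blast
  obtain tc where tc: "tc \<ge> t0" and cap: "\<beta> e tc = e tc" and avoid: "\<forall>s\<in>{t0..tc}. e s \<notin> T"
    using wins adm unfolding pursuer_wins_play_def by blast
  define \<tau> where "\<tau> = t0 + l / \<nu>"
  have "\<sigma> \<tau> = l" unfolding \<sigma>_def \<tau>_def using nu0 by simp
  then have "e \<tau> = w" unfolding e_def using l0 by simp
  moreover have "\<tau> \<ge> t0" unfolding \<tau>_def using l0 nu0 by simp
  ultimately have "\<not> \<tau> \<le> tc" using avoid w(1) by auto
  then have "tc < \<tau>" by simp
  then have lt: "\<nu> * (tc - t0) < l" unfolding \<tau>_def using nu0 by (simp add: field_simps)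
  define s where "s = \<nu> * (tc - t0)"
  have sig: "\<sigma> tc = s" unfolding \<sigma>_def s_def using lt by simp
  have s0: "0 \<le> s" unfolding s_def using tc nu0 by simp
  have sl: "s < l" using lt s_def by simp
  have b0: "\<beta> e t0 = xP0" and bl: "1-lipschitz_on {t0..} (\<beta> e)" using admb by (auto simp: admissible_def)
  have "dist (\<beta> e tc) (\<beta> e t0) \<le> 1 * dist tc t0" using lipschitz_onD[OF bl] tc by simp
  then have d1: "norm (e tc - xP0) \<le> tc - t0" using cap b0 tc by (simp add: dist_norm dist_real_def)
  have "w - e tc = (1 - s / l) *\<^sub>R (w - xE0)" unfolding e_def sig by (simp add: algebra_simps)
  then have "norm (w - e tc) = \<bar>1 - s / l\<bar> * l" unfolding l_def by (simp only: norm_scaleR)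
  also have "\<bar>1 - s / l\<bar> = 1 - s / l" using l0 sl by simp
  also have "(1 - s / l) * l = l - s" using l0 by (simp add: algebra_simps)
  finally have d2: "norm (w - e tc) = l - s" .
  have "norm (w - xP0) \<le> norm (w - e tc) + norm (e tc - xP0)"
    using norm_triangle_ineq[of "w - e tc" "e tc - xP0"] by simp
  then have d3: "norm (w - xP0) \<le> l - s + (tc - t0)" using d1 d2 by linarith
  have "\<kappa> * (tc - t0) \<le> \<nu> * (tc - t0)" using k tc by (intro mult_right_mono) auto
  then have k1: "\<kappa> * (tc - t0) \<le> s" unfolding s_def .
  have "l \<le> \<kappa> * norm (w - xP0)" using w(2) unfolding l_def .
  also have "\<dots> \<le> \<kappa> * (l - s + (tc - t0))" using d3 k by (intro mult_left_mono) auto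
  also have "\<dots> = \<kappa> * (l - s) + \<kappa> * (tc - t0)" by (simp add: algebra_simps)
  finally have "l - s \<le> \<kappa> * (l - s)" using k1 by linarith
  moreover have "\<kappa> * (l - s) < 1 * (l - s)" using k sl by (intro mult_strict_right_mono) auto
  ultimately show False by simp
qed

theorem mainTheorem10:
  fixes T :: "pt set" and xE0 xP0 :: pt and t0 \<nu>true \<nu>crit :: real
  assumes "closed T" and "T \<noteq> {}"
    and "xE0 \<noteq> xP0" and "xE0 \<notin> T"
    and "\<nu>crit \<in> crit_set T xE0 xP0" and "\<forall>\<nu>\<in>crit_set T xE0 xP0. \<nu>crit \<le> \<nu>"
    and "0 \<le> \<nu>true"
  shows "(\<exists>\<beta>. pursuer_strategy \<nu>true t0 xE0 xP0 \<beta> \<and>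
            (\<forall>e. admissible \<nu>true t0 xE0 e \<longrightarrow> pursuer_wins_play T t0 e (\<beta> e)))
         \<longleftrightarrow> \<nu>true < \<nu>crit"
proof -
  note cl = assms(1) and Tne = assms(2) and ne = assms(3) and xT = assms(4)
    and crit = assms(5) and minc = assms(6) and nut = assms(7)
  have k01: "0 \<le> \<nu>crit" "\<nu>crit < 1" and kinf: "(INF x\<in>apollonius xE0 xP0 \<nu>crit. phi T x) = 0"
    using crit by (auto simp: crit_set_def)
  define A where "A = apollonius xE0 xP0 \<nu>crit"
  have Ac: "compact A" unfolding A_def apollonius_def by simp
  have xA: "xE0 \<in> A" unfolding A_def using apol_iff[OF k01] k01 by simp
  have pc: "continuous_on A (phi T)" unfolding phi_def[abs_def] by (intro continuous_intros)
  obtain w where wA: "w \<in> A" and wmin: "\<forall>y\<in>A. phi T w \<le> phi T y"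
    using continuous_attains_inf[OF Ac _ pc] xA by blast
  have bdd: "bdd_below (phi T ` S)" for S unfolding phi_def by (rule bdd_belowI[of _ 0]) (auto simp: infdist_nonneg)
  have "phi T w \<le> (INF x\<in>A. phi T x)" using wmin xA by (intro cINF_greatest) auto
  moreover have "phi T w \<ge> 0" unfolding phi_def by (rule infdist_nonneg)
  ultimately have "infdist w T = 0" using kinf unfolding A_def phi_def by simp
  then have wT: "w \<in> T" using in_closure_iff_infdist_zero[OF Tne] cl closure_closed by blast
  have wk: "norm (w - xE0) \<le> \<nu>crit * norm (w - xP0)" using wA apol_iff[OF k01] unfolding A_def by blast
  have "w \<noteq> xE0" using wT xT by auto
  then have "0 < norm (w - xE0)" by simp
  then have "0 < \<nu>crit * norm (w - xP0)" using wk by linarith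
  then have k0: "0 < \<nu>crit" using k01 by (cases "\<nu>crit = 0") auto
  show ?thesis
  proof
    assume H: "\<exists>\<beta>. pursuer_strategy \<nu>true t0 xE0 xP0 \<beta> \<and>
            (\<forall>e. admissible \<nu>true t0 xE0 e \<longrightarrow> pursuer_wins_play T t0 e (\<beta> e))"
    show "\<nu>true < \<nu>crit"
    proof (rule ccontr)
      assume "\<not> \<nu>true < \<nu>crit"
      then have "\<nu>crit \<le> \<nu>true" by simp
      from partA[OF xT k0 k01(2) this wT wk, of t0] H show False by blast
    qed
  next
    assume lt: "\<nu>true < \<nu>crit"
    define \<mu> where "\<mu> = (\<nu>true + \<nu>crit) / 2"
    have mu: "\<nu>true < \<mu>" "\<mu> < \<nu>crit" "0 < \<mu>" "\<mu> < 1" using lt nut k01 by (auto simp: \<mu>_def)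
    have disj: "x \<notin> T" if x: "norm (x - xE0) \<le> \<mu> * norm (x - xP0)" for x
    proof
      assume xT': "x \<in> T"
      have xA': "x \<in> apollonius xE0 xP0 \<mu>" using apol_iff[of \<mu>] mu x by auto
      have "phi T x = 0" unfolding phi_def using xT' by simp
      then have "(INF y\<in>apollonius xE0 xP0 \<mu>. phi T y) \<le> 0" using cINF_lower[OF bdd xA'] by simp
      moreover have "0 \<le> (INF y\<in>apollonius xE0 xP0 \<mu>. phi T y)" using xA'
        by (intro cINF_greatest) (auto simp: phi_def infdist_nonneg)
      ultimately have "\<mu> \<in> crit_set T xE0 xP0" unfolding crit_set_def using mu by auto
      then show False using minc mu by auto
    qed
    show "\<exists>\<beta>. pursuer_strategy \<nu>true t0 xE0 xP0 \<beta> \<and>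
            (\<forall>e. admissible \<nu>true t0 xE0 e \<longrightarrow> pursuer_wins_play T t0 e (\<beta> e))"
      using partB[OF ne nut mu(1) mu(3) mu(4) disj] by blast
  qed
qed

end
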